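(* For the two-state-service-rate queue described in the context, assumed positive recurrent and with $\gamma>0$, one has $$\lim_{n\to\infty}\frac{\pi_n^a}{\pi_n^b}=\eta:=\frac{1}{2\lambda}\Bigl(\sqrt{\Delta}+\gamma-\lambda+\mu_b-\mu_a\Bigr),\qquad \Delta=(\lambda-\gamma+\mu_a-\mu_b)^2+4\lambda\gamma,$$ and consequently the effective service rate $\frac{\mu_a\pi_n^a+\mu_b\pi_n^b}{\pi_n}$ converges as $n\to\infty$ to $\mu^\infty=\mu_b+\frac{\eta}{1+\eta}(\mu_a-\mu_b)$.
   Context: Two-state-service-rate queue. Fix parameters $\lambda_a,\lambda_b>0$, $\delta>0$, $\gamma\ge0$, $\mu_a,\mu_b>0$. Set $\lambda=\lambda_a+\lambda_b$, $r=\lambda/(\lambda+\delta)$, and for $n\ge1$, $p_n=\frac{\lambda_a}{\lambda}r^n$ and $\bar p_n=1-p_n$. Consider the continuous-time Markov chain on the state space $\{0\}\cup\{(n,a),(n,b):n\ge1\}$ with the following transitions: from $0$ to $(1,a)$ at rate $\lambda_a$ and to $(1,b)$ at rate $\lambda_b$; for $n\ge1$ and $c\in\{a,b\}$, from $(n,c)$ to $(n+1,c)$ at rate $\lambda$; from $(1,c)$ to $0$ at rate $\mu_c$; for $n\ge1$ and $c\in\{a,b\}$, from $(n+1,c)$ to $(n,a)$ at rate $\mu_c p_n$ and to $(n,b)$ at rate $\mu_c\bar p_n$; for $n\ge1$, from $(n,b)$ to $(n,a)$ at rate $\gamma$. When the chain is positive recurrent, $\pi$ denotes its stationary distribution and $\pi_0=\pi(0)$,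 $\pi_n^a=\pi((n,a))$, $\pi_n^b=\pi((n,b))$, $\pi_n=\pi_n^a+\pi_n^b$ for $n\ge1$. *)

theory Defs
  imports "HOL-Analysis.Analysis"
begin

text \<open>States of the two-state-service-rate queue: Empty is state 0,
  QA n is (n,a), QB n is (n,b).  Only n >= 1 are genuine states;
  QA 0 and QB 0 are dummies lying outside the state space.\<close>
datatype qstate = Empty | QA nat | QB nat

definition qspace :: "qstate set" where
  "qspace = {Empty} \<union> {QA n | n. n \<ge> 1} \<union> {QB n | n. n \<ge> 1}"

definition r_par :: "real \<Rightarrow> real \<Rightarrow> real \<Rightarrow> real" where
  "r_par la lb d = (la + lb) / (la + lb + d)"

definition p_par :: "real \<Rightarrow> real \<Rightarrow> real \<Rightarrow> nat \<Rightarrow> real" where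
  "p_par la lb d n = la / (la + lb) * r_par la lb d ^ n"

definition qrate :: "real \<Rightarrow> real \<Rightarrow> real \<Rightarrow> real \<Rightarrow> real \<Rightarrow> real \<Rightarrow>
    qstate \<Rightarrow> qstate \<Rightarrow> real" where
  "qrate la lb d g ma mb s t =
    (case s of
       Empty \<Rightarrow> (if t = QA 1 then la else 0) + (if t = QB 1 then lb else 0)
     | QA n \<Rightarrow> (if n = 0 then 0 else
          (if t = QA (n + 1) then la + lb else 0)
        + (if n = 1 \<and> t = Empty then ma else 0)
        + (if n \<ge> 2 \<and> t = QA (n - 1) then ma * p_par la lb d (n - 1) else 0)
        + (if n \<ge> 2 \<and> t = QB (n - 1) then ma * (1 - p_par la lb d (n - 1)) else 0))
     | QB n \<Rightarrow> (if n = 0 then 0 else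
          (if t = QB (n + 1) then la + lb else 0)
        + (if n = 1 \<and> t = Empty then mb else 0)
        + (if n \<ge> 2 \<and> t = QA (n - 1) then mb * p_par la lb d (n - 1) else 0)
        + (if n \<ge> 2 \<and> t = QB (n - 1) then mb * (1 - p_par la lb d (n - 1)) else 0)
        + (if t = QA n then g else 0)))"

definition stationary_dist :: "('s \<Rightarrow> 's \<Rightarrow> real) \<Rightarrow> 's set \<Rightarrow> ('s \<Rightarrow> real) \<Rightarrow> bool" where
  "stationary_dist q S \<pi> \<longleftrightarrow>
     (\<forall>s. 0 \<le> \<pi> s) \<and> (\<forall>s. s \<notin> S \<longrightarrow> \<pi> s = 0) \<and> (\<pi> has_sum 1) S \<and>
     (\<forall>t\<in>S. \<pi> t * (\<Sum>\<^sub>\<infinity>s\<in>S - {t}. q t s) = (\<Sum>\<^sub>\<infinity>s\<in>S - {t}. \<pi> s * q s t))"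

end

theory Submission imports Defs begin

lemma infsum_supp:
  fixes f :: "'a \<Rightarrow> real"
  assumes "finite F" "F \<subseteq> A" "\<And>x. x \<in> A \<Longrightarrow> x \<notin> F \<Longrightarrow> f x = 0"
  shows "infsum f A = sum f F"
proof -
  have "infsum f A = infsum f F"
    by (rule infsum_cong_neutral) (use assms in auto)
  then show ?thesis using assms(1) by simp
qed

lemma qspace_simps[simp]: "Empty \<in> qspace" "QA k \<in> qspace \<longleftrightarrow> 1 \<le> k" "QB k \<in> qspace \<longleftrightarrow> 1 \<le> k"
  by (auto simp: qspace_def)

context fixes la lb d g ma mb :: real begin

abbreviation "q \<equiv> qrate la lb d g ma mb"
abbreviation "p \<equiv> p_par la lb d"

lemma out_E: "infsum (q Empty) (qspace - {Empty}) = la + lb"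
  by (subst infsum_supp[where F="{QA 1, QB 1}"]) (auto simp: qrate_def)

lemma out_A1: "infsum (q (QA 1)) (qspace - {QA 1}) = la + lb + ma"
  by (subst infsum_supp[where F="{QA 2, Empty}"]) (auto simp: qrate_def split: qstate.splits)

lemma out_A2: "infsum (q (QA (Suc (Suc m)))) (qspace - {QA (Suc (Suc m))}) = la + lb + ma"
  by (subst infsum_supp[where F="{QA (Suc (Suc (Suc m))), QA (Suc m), QB (Suc m)}"]) (auto simp: qrate_def algebra_simps split: qstate.splits)

lemma out_B1: "infsum (q (QB 1)) (qspace - {QB 1}) = la + lb + mb + g"
  by (subst infsum_supp[where F="{QB 2, Empty, QA 1}"]) (auto simp: qrate_def split: qstate.splits)

lemma out_B2: "infsum (q (QB (Suc (Suc m)))) (qspace - {QB (Suc (Suc m))}) = la + lb + mb + g"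
  by (subst infsum_supp[where F="{QB (Suc (Suc (Suc m))), QA (Suc m), QB (Suc m), QA (Suc (Suc m))}"]) (auto simp: qrate_def algebra_simps split: qstate.splits)

lemma in_E: "infsum (\<lambda>s. \<pi> s * q s Empty) (qspace - {Empty}) = \<pi> (QA 1) * ma + \<pi> (QB 1) * mb"
  by (subst infsum_supp[where F="{QA 1, QB 1}"]) (auto simp: qrate_def split: qstate.splits)

lemma in_A1: "infsum (\<lambda>s. \<pi> s * q s (QA 1)) (qspace - {QA 1}) =
   \<pi> Empty * la + \<pi> (QA 2) * (ma * p 1) + \<pi> (QB 2) * (mb * p 1) + \<pi> (QB 1) * g"
  by (subst infsum_supp[where F="{Empty, QA 2, QB 2, QB 1}"]) (auto simp: qrate_def split: qstate.splits)

lemma in_A2: "infsum (\<lambda>s. \<pi> s * q s (QA (Suc (Suc m)))) (qspace - {QA (Suc (Suc m))}) =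
   \<pi> (QA (Suc m)) * (la + lb) + \<pi> (QA (Suc (Suc (Suc m)))) * (ma * p (Suc (Suc m))) + \<pi> (QB (Suc (Suc (Suc m)))) * (mb * p (Suc (Suc m))) + \<pi> (QB (Suc (Suc m))) * g"
  by (subst infsum_supp[where F="{QA (Suc m), QA (Suc (Suc (Suc m))), QB (Suc (Suc (Suc m))), QB (Suc (Suc m))}"]) (auto simp: qrate_def split: qstate.splits)

lemma in_B1: "infsum (\<lambda>s. \<pi> s * q s (QB 1)) (qspace - {QB 1}) =
   \<pi> Empty * lb + \<pi> (QA 2) * (ma * (1 - p 1)) + \<pi> (QB 2) * (mb * (1 - p 1))"
  by (subst infsum_supp[where F="{Empty, QA 2, QB 2}"]) (auto simp: qrate_def split: qstate.splits)

lemma in_B2: "infsum (\<lambda>s. \<pi> s * q s (QB (Suc (Suc m)))) (qspace - {QB (Suc (Suc m))}) =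
   \<pi> (QB (Suc m)) * (la + lb) + \<pi> (QA (Suc (Suc (Suc m)))) * (ma * (1 - p (Suc (Suc m)))) + \<pi> (QB (Suc (Suc (Suc m)))) * (mb * (1 - p (Suc (Suc m))))"
  by (subst infsum_supp[where F="{QB (Suc m), QA (Suc (Suc (Suc m))), QB (Suc (Suc (Suc m)))}"]) (auto simp: qrate_def split: qstate.splits)

end

lemma contr_to_zero:
  fixes t e :: "nat \<Rightarrow> real"
  assumes K: "0 \<le> K" "K < 1" and rec: "\<And>n. n \<ge> N \<Longrightarrow> \<bar>t (Suc n)\<bar> \<le> K * \<bar>t n\<bar> + e (Suc n)"
    and e: "e \<longlonglongrightarrow> 0"
  shows "t \<longlonglongrightarrow> 0"
proof (rule LIMSEQ_I)
  fix r :: real assume r: "0 < r"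
  have "0 < r * (1 - K) / 2" using r K by simp
  with e obtain N1 where N1: "\<And>n. n \<ge> N1 \<Longrightarrow> norm (e n - 0) < r * (1 - K) / 2"
    using LIMSEQ_D by blast
  define M where "M = max N N1"
  have ind: "\<bar>t (M + k)\<bar> \<le> K ^ k * \<bar>t M\<bar> + r / 2" for k
  proof (induction k)
    case 0 then show ?case using r by simp
  next
    case (Suc k)
    have "\<bar>t (M + Suc k)\<bar> \<le> K * \<bar>t (M + k)\<bar> + e (Suc (M + k))"
      using rec[of "M + k"] by (simp add: M_def)
    also have "e (Suc (M + k)) \<le> r * (1 - K) / 2" proof -
      have "N1 \<le> Suc (M + k)" by (simp add: M_def)
      from N1[OF this] show ?thesis by simp
    qed
    also have "K * \<bar>t (M + k)\<bar> \<le> K * (K ^ k * \<bar>t M\<bar> + r / 2)"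
      using Suc.IH K by (simp add: mult_left_mono)
    finally have "\<bar>t (M + Suc k)\<bar> \<le> K * (K ^ k * \<bar>t M\<bar> + r / 2) + r * (1 - K) / 2" by simp
    moreover have "K * (K ^ k * \<bar>t M\<bar> + r / 2) = K ^ Suc k * \<bar>t M\<bar> + K * r / 2"
      by (simp add: distrib_left mult.assoc)
    moreover have "r * (1 - K) / 2 = r / 2 - K * r / 2"
      by (simp add: right_diff_distrib diff_divide_distrib mult.commute)
    ultimately show ?case by linarith
  qed
  have "(\<lambda>k. K ^ k * \<bar>t M\<bar>) \<longlonglongrightarrow> 0 * \<bar>t M\<bar>"
    by (intro tendsto_intros LIMSEQ_power_zero) (use K in simp)
  then have "(\<lambda>k. K ^ k * \<bar>t M\<bar>) \<longlonglongrightarrow> 0" by simp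
  moreover have "0 < r / 2" using r by simp
  ultimately obtain k0 where k0: "\<And>k. k \<ge> k0 \<Longrightarrow> norm (K ^ k * \<bar>t M\<bar> - 0) < r / 2"
    using LIMSEQ_D by blast
  show "\<exists>no. \<forall>n\<ge>no. norm (t n - 0) < r"
  proof (intro exI allI impI)
    fix n assume "n \<ge> M + k0"
    define k where "k = n - M"
    have k: "n = M + k" "k \<ge> k0" using \<open>n \<ge> M + k0\<close> by (auto simp: k_def)
    have "\<bar>K ^ k * \<bar>t M\<bar>\<bar> < r / 2" using k0[OF k(2)] by simp
    then show "norm (t n - 0) < r" using ind[of k] k(1) by simp
  qed
qed

lemma eig_rec:
  fixes lam ma mb g xa ya xb yb P z :: real
  assumes A: "(lam+ma)*xb = lam*xa + P*lam*(xb+yb) + g*yb"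
    and B: "(lam+mb+g)*yb = lam*ya + (1-P)*lam*(xb+yb)"
    and Z: "g + z*(mb+g) = z*(lam+ma+z*lam)"
  shows "(lam+ma+z*lam)*(xb - z*yb) = lam*(xa - z*ya) + P*lam*(xb+yb)*(1+z)"
  using A B Z by algebra

lemma t_step:
  fixes s s2 lam P Pa Pb ea ha eb hb eta eta2 M0 m0 :: real
  assumes s: "s > 0" and s2: "s2 \<ge> 0" and m0: "m0 > 0" and Pa: "Pa > 0" and Pb: "Pb > 0" and P: "P \<ge> 0" and lam: "lam > 0"
    and ha: "ha \<ge> m0 * Pa" and hb: "hb \<ge> m0 * Pb" and ea: "\<bar>ea\<bar> \<le> M0 * Pa"
    and re: "s * eb = lam * ea + P*lam*Pb*(1+eta)"
    and rh: "s2 * hb = lam * ha + P*lam*Pb*(1+eta2)"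
  shows "\<bar>eb/hb\<bar> \<le> (s2/s) * \<bar>ea/ha\<bar> + P * (lam*(\<bar>1+eta\<bar> + \<bar>1+eta2\<bar>*(M0/m0))/(s*m0))"
proof -
  define t where "t = ea / ha"
  define al where "al = P*lam*Pb*(1+eta)"
  define be where "be = P*lam*Pb*(1+eta2)"
  have hapos: "ha > 0" using ha m0 Pa by (smt (verit) mult_pos_pos)
  have hbpos: "hb > 0" using hb m0 Pb by (smt (verit) mult_pos_pos)
  have eat: "ea = t * ha" using hapos by (simp add: t_def)
  have tb: "\<bar>t\<bar> \<le> M0/m0"
  proof -
    have M0P: "0 \<le> M0 * Pa" using ea by linarith
    have "\<bar>t\<bar> = \<bar>ea\<bar> / ha" using hapos by (simp add: t_def abs_divide)
    also have "\<dots> \<le> (M0 * Pa) / ha" by (rule divide_right_mono[OF ea]) (use hapos in simp)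
    also have "\<dots> \<le> (M0 * Pa) / (m0 * Pa)" by (rule divide_left_mono[OF ha M0P]) (use hapos m0 Pa in simp)
    also have "\<dots> = M0 / m0" using Pa by simp
    finally show ?thesis .
  qed
  have iden: "eb/hb = (s2/s) * t + (al - be * t)/(s*hb)"
  proof -
    have "s * eb = t * (s2 * hb - be) + al" using re rh eat unfolding al_def be_def by (simp add: algebra_simps)
    then show ?thesis using s hbpos by (simp add: field_simps)
  qed
  have "\<bar>al - be * t\<bar> \<le> \<bar>al\<bar> + \<bar>be\<bar> * \<bar>t\<bar>" by (simp add: abs_mult order_trans[OF abs_triangle_ineq4])
  also have "\<bar>al\<bar> = P*lam*Pb*\<bar>1+eta\<bar>" using P lam Pb by (simp add: al_def abs_mult)
  also have "\<bar>be\<bar> = P*lam*Pb*\<bar>1+eta2\<bar>" using P lam Pb by (simp add: be_def abs_mult)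
  also have "P*lam*Pb*\<bar>1+eta2\<bar> * \<bar>t\<bar> \<le> P*lam*Pb*\<bar>1+eta2\<bar> * (M0/m0)"
    by (rule mult_left_mono[OF tb]) (use P lam Pb in simp)
  finally have num: "\<bar>al - be * t\<bar> \<le> P*lam*Pb*(\<bar>1+eta\<bar> + \<bar>1+eta2\<bar>*(M0/m0))" by (simp add: algebra_simps)
  have "\<bar>(al - be * t)/(s*hb)\<bar> = \<bar>al - be * t\<bar>/(s*hb)" using s hbpos by (simp add: abs_divide abs_mult)
  also have "\<dots> \<le> P*lam*Pb*(\<bar>1+eta\<bar> + \<bar>1+eta2\<bar>*(M0/m0)) / (s*hb)"
    by (rule divide_right_mono[OF num]) (use s hbpos in simp)
  also have "\<dots> \<le> P*lam*Pb*(\<bar>1+eta\<bar> + \<bar>1+eta2\<bar>*(M0/m0)) / (s*(m0*Pb))"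
  proof (rule divide_left_mono)
    show "0 \<le> P*lam*Pb*(\<bar>1+eta\<bar> + \<bar>1+eta2\<bar>*(M0/m0))" using num by linarith
    show "s*(m0*Pb) \<le> s*hb" using s hb by simp
    show "0 < s * hb * (s * (m0 * Pb))" using s hbpos m0 Pb by simp
  qed
  also have "\<dots> = P * (lam*(\<bar>1+eta\<bar> + \<bar>1+eta2\<bar>*(M0/m0))/(s*m0))" using Pb m0 s by (simp add: field_simps)
  finally have err: "\<bar>(al - be * t)/(s*hb)\<bar> \<le> P * (lam*(\<bar>1+eta\<bar> + \<bar>1+eta2\<bar>*(M0/m0))/(s*m0))" .
  have "\<bar>eb/hb\<bar> \<le> \<bar>(s2/s) * t\<bar> + \<bar>(al - be * t)/(s*hb)\<bar>" unfolding iden by (rule abs_triangle_ineq)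
  moreover have "\<bar>(s2/s) * t\<bar> = (s2/s) * \<bar>ea/ha\<bar>" using s s2 by (simp add: abs_mult t_def)
  ultimately show ?thesis using err by linarith
qed

theorem mainTheorem7:
  fixes la lb d g ma mb :: real and \<pi> :: "qstate \<Rightarrow> real"
  assumes "la > 0" "lb > 0" "d > 0" "g > 0" "ma > 0" "mb > 0"
    and "stationary_dist (qrate la lb d g ma mb) qspace \<pi>"
  defines "lam \<equiv> la + lb"
  defines "Delta \<equiv> (lam - g + ma - mb)^2 + 4 * lam * g"
  defines "eta \<equiv> (sqrt Delta + g - lam + mb - ma) / (2 * lam)"
  shows "((\<lambda>n. \<pi> (QA n) / \<pi> (QB n)) \<longlonglongrightarrow> eta) \<and>
         ((\<lambda>n. (ma * \<pi> (QA n) + mb * \<pi> (QB n)) / (\<pi> (QA n) + \<pi> (QB n)))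
           \<longlonglongrightarrow> mb + eta / (1 + eta) * (ma - mb))"
proof -
  note st = assms(7)[unfolded stationary_dist_def]
  have nn: "\<And>s. 0 \<le> \<pi> s" using st by blast
  have out0: "\<And>s. s \<notin> qspace \<Longrightarrow> \<pi> s = 0" using st by blast
  have hs: "(\<pi> has_sum 1) qspace" using st by blast
  have bal: "\<And>t. t \<in> qspace \<Longrightarrow> \<pi> t * infsum (qrate la lb d g ma mb t) (qspace - {t})
      = infsum (\<lambda>s. \<pi> s * qrate la lb d g ma mb s t) (qspace - {t})" using st by blast
  define x where "x n = \<pi> (QA n)" for n
  define y where "y n = \<pi> (QB n)" for n
  define pp where "pp n = p_par la lb d n" for n
  have lampos: "lam > 0" using assms(1,2) lam_def by simp
  have xnn: "x n \<ge> 0" and ynn: "y n \<ge> 0" for n using nn by (auto simp: x_def y_def)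
  have E0: "lam * \<pi> Empty = ma * x 1 + mb * y 1"
  proof -
    have "\<pi> Empty * (la + lb) = \<pi> (QA 1) * ma + \<pi> (QB 1) * mb" using bal[of Empty] out_E in_E by simp
    then show ?thesis by (simp add: x_def y_def lam_def algebra_simps)
  qed
  have A1: "(lam + ma) * x 1 = la * \<pi> Empty + pp 1 * (ma * x 2 + mb * y 2) + g * y 1"
  proof -
    have "\<pi> (QA 1) * (la + lb + ma) = \<pi> Empty * la + \<pi> (QA 2) * (ma * p_par la lb d 1) + \<pi> (QB 2) * (mb * p_par la lb d 1) + \<pi> (QB 1) * g"
      using bal[of "QA 1"] out_A1 in_A1 by simp
    then show ?thesis by (simp add: x_def y_def lam_def pp_def algebra_simps)
  qed
  have B1: "(lam + mb + g) * y 1 = lb * \<pi> Empty + (1 - pp 1) * (ma * x 2 + mb * y 2)"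
  proof -
    have "\<pi> (QB 1) * (la + lb + mb + g) = \<pi> Empty * lb + \<pi> (QA 2) * (ma * (1 - p_par la lb d 1)) + \<pi> (QB 2) * (mb * (1 - p_par la lb d 1))"
      using bal[of "QB 1"] out_B1 in_B1 by simp
    then show ?thesis by (simp add: x_def y_def lam_def pp_def algebra_simps)
  qed
  have A2: "(lam + ma) * x (Suc (Suc m)) = lam * x (Suc m) + pp (Suc (Suc m)) * (ma * x (Suc (Suc (Suc m))) + mb * y (Suc (Suc (Suc m)))) + g * y (Suc (Suc m))" for m
  proof -
    have "\<pi> (QA (Suc (Suc m))) * (la + lb + ma) = \<pi> (QA (Suc m)) * (la + lb) + \<pi> (QA (Suc (Suc (Suc m)))) * (ma * p_par la lb d (Suc (Suc m))) + \<pi> (QB (Suc (Suc (Suc m)))) * (mb * p_par la lb d (Suc (Suc m))) + \<pi> (QB (Suc (Suc m))) * g"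
      using bal[of "QA (Suc (Suc m))"] out_A2 in_A2 by simp
    then show ?thesis by (simp add: x_def y_def lam_def pp_def algebra_simps)
  qed
  have B2: "(lam + mb + g) * y (Suc (Suc m)) = lam * y (Suc m) + (1 - pp (Suc (Suc m))) * (ma * x (Suc (Suc (Suc m))) + mb * y (Suc (Suc (Suc m))))" for m
  proof -
    have "\<pi> (QB (Suc (Suc m))) * (la + lb + mb + g) = \<pi> (QB (Suc m)) * (la + lb) + \<pi> (QA (Suc (Suc (Suc m)))) * (ma * (1 - p_par la lb d (Suc (Suc m)))) + \<pi> (QB (Suc (Suc (Suc m)))) * (mb * (1 - p_par la lb d (Suc (Suc m))))"
      using bal[of "QB (Suc (Suc m))"] out_B2 in_B2 by simp
    then show ?thesis by (simp add: x_def y_def lam_def pp_def algebra_simps)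
  qed
  define P where "P n = (if n = 0 then \<pi> Empty else x n + y n)" for n
  have cut: "ma * x (Suc n) + mb * y (Suc n) = lam * P n" for n
  proof (induction n)
    case 0 show ?case using E0 by (simp add: P_def)
  next
    case (Suc n)
    show ?case
    proof (cases n)
      case 0
      have "ma * x 2 + mb * y 2 = lam * (x 1 + y 1)"
        using A1 B1 E0 unfolding lam_def by algebra
      then show ?thesis using 0 by (simp add: P_def numeral_2_eq_2)
    next
      case (Suc m)
      have "ma * x (Suc (Suc m)) + mb * y (Suc (Suc m)) = lam * (x (Suc m) + y (Suc m))"
        using Suc.IH Suc by (simp add: P_def)
      then have "ma * x (Suc (Suc (Suc m))) + mb * y (Suc (Suc (Suc m))) = lam * (x (Suc (Suc m)) + y (Suc (Suc m)))"
        using A2[of m] B2[of m] by algebra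
      then show ?thesis using Suc by (simp add: P_def)
    qed
  qed
  have Ap: "(lam + ma) * x (Suc (Suc m)) = lam * x (Suc m) + pp (Suc (Suc m)) * lam * (x (Suc (Suc m)) + y (Suc (Suc m))) + g * y (Suc (Suc m))" for m
    using A2[of m] cut[of "Suc (Suc m)"] by (simp add: P_def)
  have Bp: "(lam + mb + g) * y (Suc (Suc m)) = lam * y (Suc m) + (1 - pp (Suc (Suc m))) * lam * (x (Suc (Suc m)) + y (Suc (Suc m)))" for m
    using B2[of m] cut[of "Suc (Suc m)"] by (simp add: P_def)
  have r01: "0 < r_par la lb d" "r_par la lb d < 1" using assms(1-3) by (auto simp: r_par_def)
  have pp0: "0 \<le> pp n" for n using r01 assms(1,2) by (simp add: pp_def p_par_def)
  have pp1: "pp n < 1" for n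
  proof -
    have "r_par la lb d ^ n \<le> 1" using r01 by (simp add: power_le_one)
    then have "la / (la + lb) * r_par la lb d ^ n \<le> la / (la + lb) * 1"
      by (rule mult_left_mono) (use assms(1,2) in simp)
    then have "pp n \<le> la / (la + lb)" unfolding pp_def p_par_def by simp
    also have "\<dots> < 1" using assms(1,2) by simp
    finally show ?thesis .
  qed
  have pplim: "pp \<longlonglongrightarrow> 0"
  proof -
    have "(\<lambda>n. la / (la + lb) * r_par la lb d ^ n) \<longlonglongrightarrow> la / (la + lb) * 0"
      by (intro tendsto_intros LIMSEQ_power_zero) (use r01 in simp)
    moreover have "pp = (\<lambda>n. la / (la + lb) * r_par la lb d ^ n)" by (simp add: fun_eq_iff pp_def p_par_def)
    ultimately show ?thesis by simp
  qed
  have piE: "\<pi> Empty > 0"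
  proof (rule ccontr)
    assume "\<not> \<pi> Empty > 0"
    then have E: "\<pi> Empty = 0" using nn[of Empty] by simp
    have Pz: "P n = 0" for n
    proof (induction n)
      case 0 then show ?case using E by (simp add: P_def)
    next
      case (Suc n)
      have "ma * x (Suc n) + mb * y (Suc n) = 0" using cut[of n] Suc by simp
      then have "x (Suc n) = 0" "y (Suc n) = 0" using xnn[of "Suc n"] ynn[of "Suc n"] assms(5,6)
        by (smt (verit) mult_pos_pos mult_nonneg_nonneg)+
      then show ?case by (simp add: P_def)
    qed
    have "\<pi> s = 0" for s
    proof (cases s)
      case Empty then show ?thesis using E by simp
    next
      case (QA n) then show ?thesis
      proof (cases n)
        case 0 then show ?thesis using QA out0 by simp
      next
        case (Suc k) then show ?thesis using QA Pz[of "Suc k"] xnn[of "Suc k"] ynn[of "Suc k"] by (simp add: P_def x_def)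
      qed
    next
      case (QB n) then show ?thesis
      proof (cases n)
        case 0 then show ?thesis using QB out0 by simp
      next
        case (Suc k) then show ?thesis using QB Pz[of "Suc k"] xnn[of "Suc k"] ynn[of "Suc k"] by (simp add: P_def y_def)
      qed
    qed
    then have "(\<pi> has_sum 0) qspace" by (simp add: has_sum_0)
    with hs show False using has_sum_unique by fastforce
  qed
  have xpos: "x (Suc n) > 0" for n
  proof (induction n)
    case 0
    have "pp 1 * (ma * x 2 + mb * y 2) \<ge> 0" using pp0 xnn ynn assms(5,6) by simp
    moreover have "g * y 1 \<ge> 0" using ynn assms(4) by simp
    ultimately have "(lam + ma) * x 1 > 0" using A1 piE assms(1) by (smt (verit) mult_pos_pos)
    then show ?case using lampos assms(5) by (simp add: zero_less_mult_iff)
  next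
    case (Suc n)
    have "pp (Suc (Suc n)) * (ma * x (Suc (Suc (Suc n))) + mb * y (Suc (Suc (Suc n)))) \<ge> 0" using pp0 xnn ynn assms(5,6) by simp
    moreover have "g * y (Suc (Suc n)) \<ge> 0" using ynn assms(4) by simp
    ultimately have "(lam + ma) * x (Suc (Suc n)) > 0" using A2[of n] Suc lampos by (smt (verit) mult_pos_pos)
    then show ?case using lampos assms(5) by (simp add: zero_less_mult_iff)
  qed
  define Bc where "Bc = lam + ma - mb - g"
  define S where "S = sqrt Delta"
  have lg: "0 < 4 * lam * g" using lampos assms(4) by simp
  have DeltaB: "Delta = Bc^2 + 4*lam*g" unfolding Delta_def Bc_def by (simp add: algebra_simps power2_eq_square)
  have Dpos: "Delta > 0" using lg DeltaB by (smt (verit) zero_le_power2)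
  have S2: "S^2 = Delta" unfolding S_def by (rule real_sqrt_pow2) (use Dpos in linarith)
  have S0: "S \<ge> 0" using Dpos by (simp add: S_def)
  have BS: "\<bar>Bc\<bar> < S" unfolding S_def by (rule real_less_rsqrt) (use DeltaB lg in simp)
  have eta_alt: "eta = (S - Bc) / (2 * lam)" unfolding eta_def S_def Bc_def by (simp add: algebra_simps)
  define eta2 where "eta2 = (- S - Bc) / (2 * lam)"
  have etapos: "eta > 0" using BS lampos unfolding eta_alt by (simp add: abs_less_iff)
  have eta2neg: "eta2 < 0" using BS lampos unfolding eta2_def by (simp add: abs_less_iff divide_neg_pos)
  have qz: "g + z*(mb+g) = z*(lam+ma+z*lam)" if z1: "2*lam*z = w" and z2: "(w+Bc)^2 = S^2" for z w
  proof -
    have "4*lam*(lam*z^2 + Bc*z - g) = (2*lam*z)^2 + 2*Bc*(2*lam*z) - 4*lam*g" by (simp add: algebra_simps power2_eq_square)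
    also have "\<dots> = (w+Bc)^2 - Bc^2 - 4*lam*g" using z1 by (simp add: algebra_simps power2_eq_square)
    also have "\<dots> = 0" using z2 S2 DeltaB by simp
    finally have "lam*z^2 + Bc*z - g = 0" using lampos by simp
    then show ?thesis unfolding Bc_def by algebra
  qed
  have eig1: "g + eta*(mb+g) = eta*(lam+ma+eta*lam)"
    by (rule qz[of eta "S - Bc"]) (use lampos in \<open>simp_all add: eta_alt\<close>)
  have eig2: "g + eta2*(mb+g) = eta2*(lam+ma+eta2*lam)"
  proof (rule qz[of eta2 "- S - Bc"])
    show "2 * lam * eta2 = - S - Bc" using lampos by (simp add: eta2_def)
    show "(- S - Bc + Bc)^2 = S^2" by simp
  qed
  define s where "s = lam + ma + eta * lam"
  define s2 where "s2 = lam + ma + eta2 * lam"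
  have spos: "s > 0" using lampos assms(5) etapos mult_pos_pos[of eta lam] unfolding s_def by linarith
  have slt: "s2 < s" using mult_strict_right_mono[of eta2 eta lam] lampos eta2neg etapos unfolding s_def s2_def by linarith
  have s2pos: "s2 > 0"
  proof -
    define T where "T = lam + ma + mb + g"
    have T0: "T \<ge> 0" using lampos assms by (simp add: T_def)
    have "T^2 - Bc^2 = 4*(mb+g)*(lam+ma)" by (simp add: T_def Bc_def algebra_simps power2_eq_square)
    moreover have "4*(mb+g)*(lam+ma) > 4*lam*g"
    proof -
      have "4*(mb+g)*(lam+ma) - 4*lam*g = 4*(lam*mb + ma*mb + g*ma)" by (simp add: algebra_simps)
      moreover have "0 < lam*mb" "0 < ma*mb" "0 < g*ma" using lampos assms(4-6) by simp_all
      ultimately show ?thesis by (smt (verit))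
    qed
    ultimately have "S^2 < T^2" using S2 DeltaB by simp
    then have "S < T" using T0 by (rule power_less_imp_less_base)
    moreover have "2 * s2 = T - S" using lampos by (simp add: s2_def eta2_def T_def Bc_def field_simps)
    ultimately show ?thesis by simp
  qed
  define e where "e n = x n - eta * y n" for n
  define h where "h n = x n - eta2 * y n" for n
  define Q where "Q n = x n + y n" for n
  define m0 where "m0 = min 1 (- eta2)"
  define M0 where "M0 = max 1 eta"
  have m0pos: "m0 > 0" using eta2neg by (simp add: m0_def)
  have hQ: "h n \<ge> m0 * Q n" for n
  proof -
    have "m0 * x n \<le> 1 * x n" by (rule mult_right_mono) (use xnn in \<open>auto simp: m0_def\<close>)
    moreover have "m0 * y n \<le> (- eta2) * y n" by (rule mult_right_mono) (use ynn in \<open>auto simp: m0_def\<close>)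
    ultimately show ?thesis by (simp add: h_def Q_def algebra_simps)
  qed
  have eQ: "\<bar>e n\<bar> \<le> M0 * Q n" for n
  proof -
    have "1 * x n \<le> M0 * x n" by (rule mult_right_mono) (use xnn in \<open>auto simp: M0_def\<close>)
    moreover have "eta * y n \<le> M0 * y n" by (rule mult_right_mono) (use ynn in \<open>auto simp: M0_def\<close>)
    moreover have "0 \<le> eta * y n" using etapos ynn by simp
    ultimately show ?thesis using xnn[of n] by (simp add: e_def Q_def algebra_simps abs_le_iff)
  qed
  have Qpos: "Q (Suc n) > 0" for n using xpos[of n] ynn[of "Suc n"] by (simp add: Q_def)
  define D where "D = lam*(\<bar>1+eta\<bar> + \<bar>1+eta2\<bar>*(M0/m0))/(s*m0)"
  define t where "t n = e n / h n" for n
  have trec: "\<bar>t (Suc n)\<bar> \<le> (s2/s) * \<bar>t n\<bar> + pp (Suc n) * D" if n1: "n \<ge> 1" for n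
  proof -
    obtain m where m: "n = Suc m" using n1 by (cases n) auto
    have re: "s * e (Suc (Suc m)) = lam * e (Suc m) + pp (Suc (Suc m))*lam*Q (Suc (Suc m))*(1+eta)"
      using eig_rec[OF Ap[of m] Bp[of m] eig1] by (simp add: s_def e_def Q_def)
    have rh: "s2 * h (Suc (Suc m)) = lam * h (Suc m) + pp (Suc (Suc m))*lam*Q (Suc (Suc m))*(1+eta2)"
      using eig_rec[OF Ap[of m] Bp[of m] eig2] by (simp add: s2_def h_def Q_def)
    have "\<bar>e (Suc (Suc m)) / h (Suc (Suc m))\<bar> \<le> (s2/s) * \<bar>e (Suc m) / h (Suc m)\<bar> + pp (Suc (Suc m)) * D"
      unfolding D_def
      by (rule t_step[OF spos less_imp_le[OF s2pos] m0pos Qpos Qpos pp0 lampos hQ hQ eQ re rh])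
    then show ?thesis by (simp add: m t_def)
  qed
  have tlim: "t \<longlonglongrightarrow> 0"
  proof (rule contr_to_zero[where K = "s2/s" and N = 1 and e = "\<lambda>n. pp n * D"])
    show "0 \<le> s2 / s" using s2pos spos by simp
    show "s2 / s < 1" using slt spos by simp
    show "\<And>n. 1 \<le> n \<Longrightarrow> \<bar>t (Suc n)\<bar> \<le> s2 / s * \<bar>t n\<bar> + pp (Suc n) * D" by (rule trec)
    have "(\<lambda>n. pp n * D) \<longlonglongrightarrow> 0 * D" by (intro tendsto_intros pplim)
    then show "(\<lambda>n. pp n * D) \<longlonglongrightarrow> 0" by simp
  qed
  obtain N2 where N2: "\<And>n. n \<ge> N2 \<Longrightarrow> norm (t n - 0) < 1/2"
    using LIMSEQ_D[OF tlim, of "1/2"] by auto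
  have key: "y n > 0 \<and> x n / y n = (eta - eta2 * t n) / (1 - t n)" if nN: "n \<ge> Suc N2" for n
  proof -
    obtain k where k: "n = Suc k" using nN by (cases n) auto
    have tn: "\<bar>t n\<bar> < 1/2" using N2[of n] nN by simp
    have hpos: "h n > 0" using hQ[of n] Qpos[of k] m0pos k by (smt (verit) mult_pos_pos)
    have "e n = t n * h n" using hpos by (simp add: t_def)
    then have eq: "x n * (1 - t n) = y n * (eta - eta2 * t n)" by (simp add: e_def h_def algebra_simps)
    have "x n * (1 - t n) > 0" using xpos[of k] k tn by (simp add: abs_less_iff)
    then have "y n \<noteq> 0" using eq by auto
    then have yp: "y n > 0" using ynn[of n] by simp
    have "1 - t n \<noteq> 0" using tn by (auto simp: abs_less_iff)
    then have "x n / y n = (eta - eta2 * t n) / (1 - t n)" using eq yp by (simp add: field_simps)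
    then show ?thesis using yp by simp
  qed
  have ev: "eventually (\<lambda>n. y n > 0 \<and> x n / y n = (eta - eta2 * t n) / (1 - t n)) sequentially"
    unfolding eventually_sequentially using key by blast
  have L1: "(\<lambda>n. (eta - eta2 * t n) / (1 - t n)) \<longlonglongrightarrow> (eta - eta2 * 0) / (1 - 0)"
    by (intro tendsto_intros tlim) simp
  have R: "(\<lambda>n. x n / y n) \<longlonglongrightarrow> eta"
    by (rule Lim_transform_eventually[OF L1[simplified]]) (use ev in \<open>auto elim: eventually_mono\<close>)
  have L2: "(\<lambda>n. (ma * (x n / y n) + mb) / (x n / y n + 1)) \<longlonglongrightarrow> (ma * eta + mb) / (eta + 1)"
    by (intro tendsto_intros R) (use etapos in simp)
  have ev2: "eventually (\<lambda>n. (ma * (x n / y n) + mb) / (x n / y n + 1) = (ma * x n + mb * y n) / (x n + y n)) sequentially"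
    using ev
  proof (rule eventually_mono)
    fix n assume "y n > 0 \<and> x n / y n = (eta - eta2 * t n) / (1 - t n)"
    then have yp: "y n > 0" by simp
    have xy: "x n + y n > 0" using yp xnn[of n] by simp
    have "x n / y n + 1 = (x n + y n) / y n" using yp by (simp add: field_simps)
    moreover have "ma * (x n / y n) + mb = (ma * x n + mb * y n) / y n" using yp by (simp add: field_simps)
    ultimately show "(ma * (x n / y n) + mb) / (x n / y n + 1) = (ma * x n + mb * y n) / (x n + y n)"
      using yp xy by simp
  qed
  have R2: "(\<lambda>n. (ma * x n + mb * y n) / (x n + y n)) \<longlonglongrightarrow> (ma * eta + mb) / (eta + 1)"
    by (rule Lim_transform_eventually[OF L2 ev2])
  have tgt: "(ma * eta + mb) / (eta + 1) = mb + eta / (1 + eta) * (ma - mb)"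
    using etapos by (simp add: field_simps)
  show ?thesis using R R2 tgt by (simp add: x_def y_def)
qed

end
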